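(* Let $\Omega=\{\omega_1,\dots,\omega_K\}$ with $0<\omega_1<\dots<\omega_K$ and let $\mu^*$ be an aggregate market such that $\mu^*\in\mathcal{M}_r\cap\mathcal{M}_s$ for some $r<s$ (the monopolist is indifferent between charging $\omega_r$ and $\omega_s$ in $\mu^*$). Then for every cost level $k\ge0$, not segmenting (the segmentation placing all mass on $\mu^*$) is not optimal: there exists a segmentation of $\mu^*$ giving the monopolist a strictly higher net payoff, so the monopolist always chooses to segment the market.
   Context: A monopolist with zero marginal cost sells one good to a unit mass of consumers with valuations in $\Omega$. A market is a probability vector $\mu=(\mu_1,\dots,\mu_K)$, $\mu_i$ the share of consumers with valuation $\omega_i$. Let $s(p,\omega)=p$ if $\omega\ge p$ and $0$ otherwise; in each market $\mu$ the monopolist charges $p^*(\mu)\in\arg\max_p\sum_i s(p,\omega_i)\mu_i$, and $\mathcal{M}_j$ denotes the set of markets in which $\omega_j$ is an optimal price. A segmentation of $\mu^*$ is a finitely supported probability distribution $\tau$ over markets with $\sum_{\mu^s\in\mathrm{supp}\,\tau}\tau(\mu^s)\mu^s=\mu^*$. With Shannon entropy $H(\mu)=-\sum_i\mu_i\ln\mu_i$ ($0\ln0=0$), the cost of $\tau$ is $c(\tau;\mu^*,k)=k\,[H(\mu^* )-\mathbb{E}_\tau H(\mu^s)]$, and the monopolist's net payoff from $\tau$ is $\mathbb{E}_\tau\big[\sum_i s(p^*(\mu^s),\omega_i)\mu^s_i\big]-c(\tau;\mu^*,k)$. *)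

theory Defs
  imports Complex_Main
begin

(* Valuations are indexed 0..K-1: omega 0 < ... < omega (K-1). *)

definition s_fun :: "real \<Rightarrow> real \<Rightarrow> real" where
  "s_fun p w = (if w \<ge> p then p else 0)"

definition is_market :: "nat \<Rightarrow> (nat \<Rightarrow> real) \<Rightarrow> bool" where
  "is_market K \<mu> \<longleftrightarrow> (\<forall>i<K. \<mu> i \<ge> 0) \<and> (\<forall>i\<ge>K. \<mu> i = 0) \<and> (\<Sum>i<K. \<mu> i) = 1"

definition revenue :: "(nat \<Rightarrow> real) \<Rightarrow> nat \<Rightarrow> real \<Rightarrow> (nat \<Rightarrow> real) \<Rightarrow> real" where
  "revenue \<omega> K p \<mu> = (\<Sum>i<K. s_fun p (\<omega> i) * \<mu> i)"

definition p_star :: "(nat \<Rightarrow> real) \<Rightarrow> nat \<Rightarrow> (nat \<Rightarrow> real) \<Rightarrow> real" where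
  "p_star \<omega> K \<mu> = (SOME p. \<forall>q. revenue \<omega> K q \<mu> \<le> revenue \<omega> K p \<mu>)"

definition M_set :: "(nat \<Rightarrow> real) \<Rightarrow> nat \<Rightarrow> nat \<Rightarrow> (nat \<Rightarrow> real) set" where
  "M_set \<omega> K j = {\<mu>. is_market K \<mu> \<and> (\<forall>p. revenue \<omega> K p \<mu> \<le> revenue \<omega> K (\<omega> j) \<mu>)}"

definition supp :: "((nat \<Rightarrow> real) \<Rightarrow> real) \<Rightarrow> (nat \<Rightarrow> real) set" where
  "supp \<tau> = {m. \<tau> m \<noteq> 0}"

definition is_segmentation :: "nat \<Rightarrow> (nat \<Rightarrow> real) \<Rightarrow> ((nat \<Rightarrow> real) \<Rightarrow> real) \<Rightarrow> bool" where
  "is_segmentation K \<mu> \<tau> \<longleftrightarrow>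
     finite (supp \<tau>) \<and> (\<forall>m. \<tau> m \<ge> 0) \<and> (\<Sum>m\<in>supp \<tau>. \<tau> m) = 1 \<and>
     (\<forall>m\<in>supp \<tau>. is_market K m) \<and>
     (\<forall>i<K. (\<Sum>m\<in>supp \<tau>. \<tau> m * m i) = \<mu> i)"

(* Shannon entropy; note ln 0 = 0 in Isabelle, so 0 ln 0 = 0 *)
definition entropy :: "nat \<Rightarrow> (nat \<Rightarrow> real) \<Rightarrow> real" where
  "entropy K \<mu> = - (\<Sum>i<K. \<mu> i * ln (\<mu> i))"

definition cost :: "nat \<Rightarrow> ((nat \<Rightarrow> real) \<Rightarrow> real) \<Rightarrow> (nat \<Rightarrow> real) \<Rightarrow> real \<Rightarrow> real" where
  "cost K \<tau> \<mu> k = k * (entropy K \<mu> - (\<Sum>m\<in>supp \<tau>. \<tau> m * entropy K m))"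

definition net_payoff :: "(nat \<Rightarrow> real) \<Rightarrow> nat \<Rightarrow> ((nat \<Rightarrow> real) \<Rightarrow> real) \<Rightarrow> (nat \<Rightarrow> real) \<Rightarrow> real \<Rightarrow> real" where
  "net_payoff \<omega> K \<tau> \<mu> k =
     (\<Sum>m\<in>supp \<tau>. \<tau> m * revenue \<omega> K (p_star \<omega> K m) m) - cost K \<tau> \<mu> k"

definition no_seg :: "(nat \<Rightarrow> real) \<Rightarrow> (nat \<Rightarrow> real) \<Rightarrow> real" where
  "no_seg \<mu> = (\<lambda>m. if m = \<mu> then 1 else 0)"

end

theory Submission
  imports Defs
begin

lemma sum_upd:
  fixes K :: nat and h :: "nat \<Rightarrow> real \<Rightarrow> real"
  assumes "i < K"
  shows "(\<Sum>l<K. h l ((m(i:=x)) l)) = (\<Sum>l<K. h l (m l)) + h i x - h i (m i)"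
proof -
  have 1: "(\<Sum>l<K. h l ((m(i:=x)) l)) = h i x + (\<Sum>l\<in>{..<K}-{i}. h l ((m(i:=x)) l))"
    using assms by (subst sum.remove[of "{..<K}" i]) auto
  have 2: "(\<Sum>l\<in>{..<K}-{i}. h l ((m(i:=x)) l)) = (\<Sum>l\<in>{..<K}-{i}. h l (m l))"
    by (rule sum.cong) auto
  have 3: "(\<Sum>l<K. h l (m l)) = h i (m i) + (\<Sum>l\<in>{..<K}-{i}. h l (m l))"
    using assms by (subst sum.remove[of "{..<K}" i]) auto
  show ?thesis using 1 2 3 by simp
qed

lemma revenue_upd:
  assumes "i < K"
  shows "revenue \<omega> K p (m(i:=x)) = revenue \<omega> K p m + s_fun p (\<omega> i) * x - s_fun p (\<omega> i) * m i"
  unfolding revenue_def using sum_upd[OF assms, of "\<lambda>l v. s_fun p (\<omega> l) * v" m x] by simp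

lemma entropy_upd:
  assumes "i < K"
  shows "entropy K (m(i:=x)) = entropy K m + m i * ln (m i) - x * ln x"
  unfolding entropy_def using sum_upd[OF assms, of "\<lambda>l v. v * ln v" m x] by simp

lemma sum_upd1:
  fixes K :: nat and m :: "nat \<Rightarrow> real"
  assumes "i < K"
  shows "(\<Sum>l<K. (m(i:=x)) l) = (\<Sum>l<K. m l) + x - m i"
  using sum_upd[OF assms, of "\<lambda>l v. v" m x] by simp

lemma mono_iff:
  fixes i j K :: nat and \<omega> :: "nat \<Rightarrow> real"
  assumes incr: "\<And>i j. i < j \<Longrightarrow> j < K \<Longrightarrow> \<omega> i < \<omega> j"
    and "i < K" "j < K"
  shows "\<omega> i \<le> \<omega> j \<longleftrightarrow> i \<le> j"
proof
  assume a: "\<omega> i \<le> \<omega> j" show "i \<le> j"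
  proof (rule ccontr)
    assume "\<not> i \<le> j" hence "j < i" by simp
    hence "\<omega> j < \<omega> i" using incr assms by blast
    thus False using a by simp
  qed
next
  assume "i \<le> j" then show "\<omega> i \<le> \<omega> j" using incr[of i j] assms
    by (cases "i = j") (auto intro: less_imp_le)
qed

lemma exists_opt:
  assumes pos: "0 < \<omega> 0"
    and incr: "\<And>i j. i < j \<Longrightarrow> j < K \<Longrightarrow> \<omega> i < \<omega> j"
    and K: "0 < K" and nn: "\<forall>i<K. m i \<ge> 0"
  shows "\<exists>p. \<forall>q. revenue \<omega> K q m \<le> revenue \<omega> K p m"
proof -
  have ge0: "\<And>i. i<K \<Longrightarrow> \<omega> 0 \<le> \<omega> i" using mono_iff[where \<omega>=\<omega> and K=K, OF incr] K by auto
  define S where "S = (\<lambda>j. revenue \<omega> K (\<omega> j) m) ` {..<K}"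
  have "finite S" "S \<noteq> {}" using K by (auto simp: S_def)
  then have "Max S \<in> S" by simp
  then obtain j0 where j0k: "j0 < K" and j0e: "Max S = revenue \<omega> K (\<omega> j0) m" by (auto simp: S_def)
  have j0: "\<forall>j<K. revenue \<omega> K (\<omega> j) m \<le> revenue \<omega> K (\<omega> j0) m"
  proof (intro allI impI)
    fix j assume "j < K"
    then have "revenue \<omega> K (\<omega> j) m \<in> S" by (auto simp: S_def)
    then show "revenue \<omega> K (\<omega> j) m \<le> revenue \<omega> K (\<omega> j0) m"
      using Max_ge[OF \<open>finite S\<close>] j0e by metis
  qed
  have revnn: "\<And>j. j<K \<Longrightarrow> 0 \<le> revenue \<omega> K (\<omega> j) m"
  proof -
    fix j assume j: "j<K"
    have "0 \<le> \<omega> j" using ge0[OF j] pos by linarith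
    then show "0 \<le> revenue \<omega> K (\<omega> j) m"
      unfolding revenue_def s_fun_def using nn by (intro sum_nonneg) auto
  qed
  show ?thesis
  proof (intro exI allI)
    fix q
    show "revenue \<omega> K q m \<le> revenue \<omega> K (\<omega> j0) m"
    proof (cases "\<exists>j<K. q \<le> \<omega> j")
      case True
      define j where "j = (LEAST j. j<K \<and> q \<le> \<omega> j)"
      have j: "j<K" "q \<le> \<omega> j" using LeastI_ex[OF True] j_def by auto
      have jl: "\<And>i. i<K \<Longrightarrow> q \<le> \<omega> i \<Longrightarrow> j \<le> i" using j_def by (auto intro: Least_le)
      have "revenue \<omega> K q m \<le> revenue \<omega> K (\<omega> j) m"
        unfolding revenue_def
      proof (rule sum_mono)
        fix i assume "i \<in> {..<K}"
        then have i: "i<K" by simp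
        show "s_fun q (\<omega> i) * m i \<le> s_fun (\<omega> j) (\<omega> i) * m i"
        proof (cases "q \<le> \<omega> i")
          case True
          then have "j \<le> i" using jl i by auto
          then have "\<omega> j \<le> \<omega> i" using mono_iff[where \<omega>=\<omega> and K=K, OF incr j(1) i] by simp
          then show ?thesis using True j nn i unfolding s_fun_def by (auto intro: mult_right_mono)
        next
          case False
          then have "\<not> \<omega> j \<le> \<omega> i" using j by auto
          thus ?thesis using False unfolding s_fun_def by simp
        qed
      qed
      also have "\<dots> \<le> revenue \<omega> K (\<omega> j0) m" using j0 j by auto
      finally show ?thesis .
    next
      case False
      have "revenue \<omega> K q m = 0" unfolding revenue_def s_fun_def using False
        by (intro sum.neutral) auto
      then show ?thesis using revnn j0k by simp
    qed
  qed
qed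

lemma V_ge:
  assumes pos: "0 < \<omega> 0"
    and incr: "\<And>i j. i < j \<Longrightarrow> j < K \<Longrightarrow> \<omega> i < \<omega> j"
    and K: "0 < K" and nn: "\<forall>i<K. m i \<ge> 0"
  shows "revenue \<omega> K q m \<le> revenue \<omega> K (p_star \<omega> K m) m"
proof -
  have "\<forall>q. revenue \<omega> K q m \<le> revenue \<omega> K (p_star \<omega> K m) m"
    unfolding p_star_def by (rule someI_ex[OF exists_opt[where \<omega>=\<omega> and K=K and m=m, OF pos incr K nn]])
  then show ?thesis by blast
qed

lemma d1: fixes c \<sigma> :: real assumes "0 < c"
  shows "((\<lambda>z. (c + \<sigma>*z) * ln (c + \<sigma>*z)) has_real_derivative \<sigma>*(ln c + 1)) (at 0)"
proof -
  have "((\<lambda>z. (c + \<sigma>*z) * ln (c + \<sigma>*z)) has_real_derivative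
      ((0 + \<sigma>*1) * ln (c + \<sigma>*0) + (c + \<sigma>*0) * ((0 + \<sigma>*1) / (c+\<sigma>*0)))) (at 0)"
    using assms by (intro derivative_eq_intros refl) auto
  then show ?thesis using assms by (simp add: algebra_simps)
qed

lemma aux_ineq: fixes R a b e c :: real
  shows "R \<le> a \<Longrightarrow> R + e \<le> b \<Longrightarrow> c < e \<Longrightarrow> R < (a+b)/2 - c/2" by (simp add: field_simps)

lemma F_lim:
  fixes \<alpha> \<beta> :: real
  assumes a: "0 < \<alpha>" and b: "0 < \<beta>"
  defines "F \<equiv> (\<lambda>y. (\<alpha>+y)*ln(\<alpha>+y) + (\<alpha>-y)*ln(\<alpha>-y) + (\<beta>-y)*ln(\<beta>-y) + (\<beta>+y)*ln(\<beta>+y)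
                     - 2*(\<alpha>*ln \<alpha>) - 2*(\<beta>*ln \<beta>))"
  shows "((\<lambda>y. F y / y) \<longlongrightarrow> 0) (at 0)"
proof -
  have "((\<lambda>z. (\<alpha> + 1*z)*ln(\<alpha>+1*z) + (\<alpha> + (-1)*z)*ln(\<alpha>+(-1)*z) + (\<beta> + (-1)*z)*ln(\<beta>+(-1)*z)
        + (\<beta> + 1*z)*ln(\<beta>+1*z) - 2*(\<alpha>*ln \<alpha>) - 2*(\<beta>*ln \<beta>)) has_real_derivative
        (1*(ln \<alpha>+1) + (-1)*(ln \<alpha>+1) + (-1)*(ln \<beta>+1) + 1*(ln \<beta>+1) - 0 - 0)) (at 0)"
    using a b by (intro DERIV_diff DERIV_add d1 DERIV_const)
  then have d: "(F has_real_derivative 0) (at 0)" unfolding F_def by (simp add: algebra_simps)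
  have F0: "F 0 = 0" unfolding F_def by simp
  show ?thesis using d unfolding has_field_derivative_iff by (simp add: F0)
qed

theorem proposition2:
  fixes \<omega> :: "nat \<Rightarrow> real" and K :: nat and \<mu> :: "nat \<Rightarrow> real" and r s :: nat
  assumes pos: "0 < \<omega> 0"
    and incr: "\<And>i j. i < j \<Longrightarrow> j < K \<Longrightarrow> \<omega> i < \<omega> j"
    and rs: "r < s" "s < K"
    and Mr: "\<mu> \<in> M_set \<omega> K r" and Ms: "\<mu> \<in> M_set \<omega> K s"
  shows "\<forall>k::real. k \<ge> 0 \<longrightarrow>
           (\<exists>\<tau>. is_segmentation K \<mu> \<tau> \<and>
                 net_payoff \<omega> K \<tau> \<mu> k > net_payoff \<omega> K (no_seg \<mu>) \<mu> k)"
proof (intro allI impI)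
  fix k :: real assume k: "0 \<le> k"
  have mk: "is_market K \<mu>" and optr: "\<forall>p. revenue \<omega> K p \<mu> \<le> revenue \<omega> K (\<omega> r) \<mu>"
    using Mr unfolding M_set_def by auto
  have opts: "\<forall>p. revenue \<omega> K p \<mu> \<le> revenue \<omega> K (\<omega> s) \<mu>"
    using Ms unfolding M_set_def by auto
  define R where "R = revenue \<omega> K (\<omega> r) \<mu>"
  have Rs: "revenue \<omega> K (\<omega> s) \<mu> = R" using optr opts unfolding R_def by (meson order.antisym)
  have nn: "\<forall>i<K. \<mu> i \<ge> 0" and sum1: "(\<Sum>i<K. \<mu> i) = 1" and zero: "\<forall>i\<ge>K. \<mu> i = 0"
    using mk unfolding is_market_def by auto
  have K0: "0 < K" using rs by auto
  have mi: "\<And>i j. i<K \<Longrightarrow> j<K \<Longrightarrow> \<omega> i \<le> \<omega> j \<longleftrightarrow> i \<le> j"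
    using mono_iff[where \<omega>=\<omega> and K=K, OF incr] by blast
  have rK: "r < K" using rs by auto
  have "revenue \<omega> K (\<omega> 0) \<mu> = (\<Sum>i<K. \<omega> 0 * \<mu> i)"
    unfolding revenue_def s_fun_def using mi K0 by (intro sum.cong) auto
  also have "\<dots> = \<omega> 0" using sum1 by (simp add: sum_distrib_left[symmetric])
  finally have Rpos: "0 < R" using optr pos unfolding R_def by (metis less_le_trans)
  have "\<exists>ib. s \<le> ib \<and> ib<K \<and> 0 < \<mu> ib"
  proof (rule ccontr)
    assume "\<not> ?thesis"
    then have z: "\<And>i. s\<le>i \<Longrightarrow> i<K \<Longrightarrow> \<mu> i = 0" using nn by force
    have "revenue \<omega> K (\<omega> s) \<mu> = 0" unfolding revenue_def s_fun_def
      using z mi rs by (intro sum.neutral) auto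
    then show False using Rs Rpos by simp
  qed
  then obtain ib where ib: "s \<le> ib" "ib < K" "0 < \<mu> ib" by blast
  have "\<exists>ia. r \<le> ia \<and> ia<s \<and> 0 < \<mu> ia"
  proof (rule ccontr)
    assume nz: "\<not> ?thesis"
    have z: "\<mu> i = 0" if "r\<le>i" "i<s" for i
    proof -
      have "i < K" using that rs by simp
      then show ?thesis using nn that nz by force
    qed
    have "revenue \<omega> K (\<omega> r) \<mu> < revenue \<omega> K (\<omega> s) \<mu>" unfolding revenue_def
    proof (rule sum_strict_mono_ex1)
      show "\<forall>x\<in>{..<K}. s_fun (\<omega> r) (\<omega> x) * \<mu> x \<le> s_fun (\<omega> s) (\<omega> x) * \<mu> x"
      proof
        fix x assume "x \<in> {..<K}"
        then have x: "x < K" by simp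
        have wrs: "\<omega> r < \<omega> s" using incr rs by blast
        show "s_fun (\<omega> r) (\<omega> x) * \<mu> x \<le> s_fun (\<omega> s) (\<omega> x) * \<mu> x"
          unfolding s_fun_def using mi[OF rK x] mi[OF rs(2) x] z[of x] nn x wrs
          by (auto intro: mult_right_mono)
      qed
      have wrs: "\<omega> r < \<omega> s" using incr rs by blast
      show "\<exists>a\<in>{..<K}. s_fun (\<omega> r) (\<omega> a) * \<mu> a < s_fun (\<omega> s) (\<omega> a) * \<mu> a"
        using ib mi[OF rK ib(2)] mi[OF rs(2) ib(2)] rs wrs unfolding s_fun_def
        by (intro bexI[of _ ib]) auto
    qed simp
    then show False using Rs R_def by simp
  qed
  then obtain ia where ia: "r \<le> ia" "ia < s" "0 < \<mu> ia" by blast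
  have iaK: "ia < K" using ia rs by simp
  have iab: "ia \<noteq> ib" using ia ib by simp
  define \<alpha> where "\<alpha> = \<mu> ia"
  define \<beta> where "\<beta> = \<mu> ib"
  have a0: "0 < \<alpha>" and b0: "0 < \<beta>" using ia ib \<alpha>_def \<beta>_def by auto
  define F where "F \<equiv> (\<lambda>y. (\<alpha>+y)*ln(\<alpha>+y) + (\<alpha>-y)*ln(\<alpha>-y) + (\<beta>-y)*ln(\<beta>-y) + (\<beta>+y)*ln(\<beta>+y)
                     - 2*(\<alpha>*ln \<alpha>) - 2*(\<beta>*ln \<beta>))"
  have L: "((\<lambda>y. F y / y) \<longlongrightarrow> 0) (at 0)" using F_lim[OF a0 b0] unfolding F_def by simp
  have "((\<lambda>y. k * (F y / y)) \<longlongrightarrow> 0) (at_right 0)"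
    using tendsto_mult_right_zero[OF tendsto_mono[OF at_le[of "{0<..}" UNIV] L]] by simp
  moreover have ws: "0 < \<omega> s" using pos mi[of 0 s] rs by force
  ultimately have "eventually (\<lambda>y. k * (F y / y) < \<omega> s) (at_right 0)"
    using order_tendstoD(2) by blast
  then obtain b1 :: real where b1: "b1 > 0" "\<And>y. y > 0 \<Longrightarrow> y < b1 \<Longrightarrow> k * (F y / y) < \<omega> s"
    unfolding eventually_at_right_field by auto
  define \<epsilon> where "\<epsilon> = min b1 (min \<alpha> \<beta>) / 2"
  have e0: "0 < \<epsilon>" "\<epsilon> < b1" "\<epsilon> < \<alpha>" "\<epsilon> < \<beta>" using b1 a0 b0 unfolding \<epsilon>_def by auto
  have kF: "k * F \<epsilon> < \<epsilon> * \<omega> s"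
  proof -
    have "k * (F \<epsilon> / \<epsilon>) < \<omega> s" using b1 e0 by auto
    then show ?thesis using e0 by (simp add: pos_divide_less_eq mult.commute)
  qed
  define \<mu>1 where "\<mu>1 = \<mu>(ia := \<alpha> + \<epsilon>, ib := \<beta> - \<epsilon>)"
  define \<mu>2 where "\<mu>2 = \<mu>(ia := \<alpha> - \<epsilon>, ib := \<beta> + \<epsilon>)"
  define \<tau> where "\<tau> = (\<lambda>m. if m = \<mu>1 \<or> m = \<mu>2 then (1/2::real) else 0)"
  have ne: "\<mu>1 \<noteq> \<mu>2"
  proof
    assume "\<mu>1 = \<mu>2"
    then have "\<mu>1 ia = \<mu>2 ia" by simp
    then show False using iab e0 unfolding \<mu>1_def \<mu>2_def by simp
  qed
  have supp: "supp \<tau> = {\<mu>1, \<mu>2}" unfolding supp_def \<tau>_def by auto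
  have m1: "is_market K \<mu>1"
    unfolding is_market_def
  proof (intro conjI allI impI)
    fix i assume "i < K" then show "0 \<le> \<mu>1 i" using nn e0 unfolding \<mu>1_def by auto
  next
    fix i assume "K \<le> i" then show "\<mu>1 i = 0" using zero iaK ib unfolding \<mu>1_def by auto
  next
    show "(\<Sum>i<K. \<mu>1 i) = 1" unfolding \<mu>1_def
      using sum_upd1[OF ib(2), of "\<mu>(ia := \<alpha> + \<epsilon>)"] sum_upd1[OF iaK, of \<mu>] iab sum1 \<alpha>_def \<beta>_def
      by simp
  qed
  have m2: "is_market K \<mu>2"
    unfolding is_market_def
  proof (intro conjI allI impI)
    fix i assume "i < K" then show "0 \<le> \<mu>2 i" using nn e0 unfolding \<mu>2_def by auto
  next
    fix i assume "K \<le> i" then show "\<mu>2 i = 0" using zero iaK ib unfolding \<mu>2_def by auto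
  next
    show "(\<Sum>i<K. \<mu>2 i) = 1" unfolding \<mu>2_def
      using sum_upd1[OF ib(2), of "\<mu>(ia := \<alpha> - \<epsilon>)"] sum_upd1[OF iaK, of \<mu>] iab sum1 \<alpha>_def \<beta>_def
      by simp
  qed
  have seg: "is_segmentation K \<mu> \<tau>"
    unfolding is_segmentation_def supp using ne m1 m2
    by (auto simp: \<tau>_def \<mu>1_def \<mu>2_def \<alpha>_def \<beta>_def field_simps)
  have nn1: "\<forall>i<K. \<mu>1 i \<ge> 0" and nn2: "\<forall>i<K. \<mu>2 i \<ge> 0" using m1 m2 unfolding is_market_def by auto
  have V1: "revenue \<omega> K (\<omega> r) \<mu>1 \<le> revenue \<omega> K (p_star \<omega> K \<mu>1) \<mu>1"
    by (rule V_ge[where \<omega>=\<omega> and K=K, OF pos incr K0 nn1])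
  have V2: "revenue \<omega> K (\<omega> s) \<mu>2 \<le> revenue \<omega> K (p_star \<omega> K \<mu>2) \<mu>2"
    by (rule V_ge[where \<omega>=\<omega> and K=K, OF pos incr K0 nn2])
  have sr_a: "s_fun (\<omega> r) (\<omega> ia) = \<omega> r" using mi[OF rK iaK] ia unfolding s_fun_def by simp
  have sr_b: "s_fun (\<omega> r) (\<omega> ib) = \<omega> r" using mi[OF rK ib(2)] ib rs unfolding s_fun_def by simp
  have ss_a: "s_fun (\<omega> s) (\<omega> ia) = 0" using mi[OF rs(2) iaK] ia unfolding s_fun_def by simp
  have ss_b: "s_fun (\<omega> s) (\<omega> ib) = \<omega> s" using mi[OF rs(2) ib(2)] ib unfolding s_fun_def by simp
  have R1: "revenue \<omega> K (\<omega> r) \<mu>1 = R"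
    unfolding \<mu>1_def using revenue_upd[OF ib(2), of \<omega> "\<omega> r" "\<mu>(ia := \<alpha> + \<epsilon>)" "\<beta> - \<epsilon>"]
      revenue_upd[OF iaK, of \<omega> "\<omega> r" \<mu> "\<alpha> + \<epsilon>"] iab sr_a sr_b R_def \<alpha>_def \<beta>_def
    by (simp add: algebra_simps)
  have R2: "revenue \<omega> K (\<omega> s) \<mu>2 = R + \<epsilon> * \<omega> s"
    unfolding \<mu>2_def using revenue_upd[OF ib(2), of \<omega> "\<omega> s" "\<mu>(ia := \<alpha> - \<epsilon>)" "\<beta> + \<epsilon>"]
      revenue_upd[OF iaK, of \<omega> "\<omega> s" \<mu> "\<alpha> - \<epsilon>"] iab ss_a ss_b Rs \<alpha>_def \<beta>_def
    by (simp add: algebra_simps)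
  have H1: "entropy K \<mu>1 = entropy K \<mu> + \<alpha> * ln \<alpha> - (\<alpha>+\<epsilon>) * ln (\<alpha>+\<epsilon>) + \<beta> * ln \<beta> - (\<beta>-\<epsilon>) * ln (\<beta>-\<epsilon>)"
    unfolding \<mu>1_def using entropy_upd[OF ib(2), of "\<mu>(ia := \<alpha> + \<epsilon>)" "\<beta> - \<epsilon>"] entropy_upd[OF iaK, of \<mu>]
      iab \<alpha>_def \<beta>_def by simp
  have H2: "entropy K \<mu>2 = entropy K \<mu> + \<alpha> * ln \<alpha> - (\<alpha>-\<epsilon>) * ln (\<alpha>-\<epsilon>) + \<beta> * ln \<beta> - (\<beta>+\<epsilon>) * ln (\<beta>+\<epsilon>)"
    unfolding \<mu>2_def using entropy_upd[OF ib(2), of "\<mu>(ia := \<alpha> - \<epsilon>)" "\<beta> + \<epsilon>"] entropy_upd[OF iaK, of \<mu>]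
      iab \<alpha>_def \<beta>_def by simp
  have cost: "cost K \<tau> \<mu> k = k * F \<epsilon> / 2"
  proof -
    have "cost K \<tau> \<mu> k = k * (entropy K \<mu> - (entropy K \<mu>1 / 2 + entropy K \<mu>2 / 2))"
      unfolding cost_def supp using ne by (simp add: \<tau>_def)
    also have "\<dots> = k * F \<epsilon> / 2" unfolding H1 H2 F_def by (simp add: field_simps)
    finally show ?thesis .
  qed
  have NP: "net_payoff \<omega> K \<tau> \<mu> k = (revenue \<omega> K (p_star \<omega> K \<mu>1) \<mu>1 + revenue \<omega> K (p_star \<omega> K \<mu>2) \<mu>2) / 2 - k * F \<epsilon> / 2"
    unfolding net_payoff_def cost supp using ne by (simp add: \<tau>_def)
  have nn0: "\<forall>i<K. \<mu> i \<ge> 0" using nn by simp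
  have V0: "revenue \<omega> K (p_star \<omega> K \<mu>) \<mu> = R"
    using V_ge[where \<omega>=\<omega> and K=K, OF pos incr K0 nn0, of "\<omega> r"] optr R_def
    by (meson order.antisym)
  have supp0: "supp (no_seg \<mu>) = {\<mu>}" unfolding supp_def no_seg_def by auto
  have N0: "net_payoff \<omega> K (no_seg \<mu>) \<mu> k = R"
    unfolding net_payoff_def cost_def supp0 using V0 by (simp add: no_seg_def)
  have "net_payoff \<omega> K (no_seg \<mu>) \<mu> k < net_payoff \<omega> K \<tau> \<mu> k"
  proof -
    have A: "R \<le> revenue \<omega> K (p_star \<omega> K \<mu>1) \<mu>1" using V1 R1 by simp
    have B: "R + \<epsilon> * \<omega> s \<le> revenue \<omega> K (p_star \<omega> K \<mu>2) \<mu>2" using V2 R2 by simp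
    have C: "R < (revenue \<omega> K (p_star \<omega> K \<mu>1) \<mu>1 + revenue \<omega> K (p_star \<omega> K \<mu>2) \<mu>2) / 2 - k * F \<epsilon> / 2"
      using aux_ineq[OF A B kF] .
    show ?thesis unfolding N0 NP by (rule C)
  qed
  then show "\<exists>\<tau>. is_segmentation K \<mu> \<tau> \<and>
                 net_payoff \<omega> K \<tau> \<mu> k > net_payoff \<omega> K (no_seg \<mu>) \<mu> k"
    using seg by blast
qed

end
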